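(* Let $(A,B)$, $(A',B')$ be primitive nondegenerate pairs of integral ternary quadratic forms such that $Q(A',B')\subset Q(A,B)$. Then there exist $\delta_1\in M_3(\mathbb{Z})$ and $\delta_2\in M_2(\mathbb{Z})$ with $(A',B')=(\delta_1,\delta_2^{-1})\cdot(A,B)$ and $|\det\delta_1|=|\det\delta_2|=(Q(A,B):Q(A',B'))$.
   Context: For $(\delta_1,\delta_2)\in \mathrm{GL}_3(\mathbb{Q})\times\mathrm{GL}_2(\mathbb{Q})$ with $\delta_2=\begin{pmatrix}p&q\\ r&s\end{pmatrix}$, the action on pairs of ternary quadratic forms is $(\delta_1,\delta_2)\cdot(A,B)=(p(\delta_1A)+q(\delta_1B),\,r(\delta_1A)+s(\delta_1B))$, $(\delta_1A)(v)=A(v\delta_1)$. A pair is nondegenerate if the discriminant of $4\det(u_1A-u_2B)$ is nonzero, and primitive if $\gcd\{\lambda^{ij}_{k\ell}\}=1$ where $\lambda^{ij}_{k\ell}=a_{ij}b_{k\ell}-b_{ij}a_{k\ell}$ ($a_{ij},b_{ij}$ the coefficients of $v_iv_j$, symmetrized). $Q(A,B)$ is Bhargava's quartic ring with basis $\{1,\alpha_1,\alpha_2,\alpha_3\}$ and multiplication $\alpha_i\alpha_j=\sum_k c_{ij}^k\alpha_k$, where for a permutation $(i,j,k)$ of $(1,2,3)$ with sign $\pm$: $c_{ii}^i=\pm\lambda^{ik}_{ij}+C_i$, $c_{ii}^j=\pm\lambda^{ii}_{ik}$, $c_{ij}^i=\pm\tfrac12\lambda^{ik}_{jj}+\tfrac12C_j$,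 $c_{ij}^k=\pm\lambda^{jj}_{ii}$, $C_1=\lambda^{23}_{11}$, $C_2=-\lambda^{13}_{22}$, $C_3=\lambda^{12}_{33}$, $c_{ij}^0=\sum_r(c_{jk}^rc_{ri}^k-c_{ij}^rc_{rk}^k)$ ($k\ne i$). The inclusion $Q(A',B')\subset Q(A,B)$ means $Q(A',B')$ is (isomorphic to) a subring of finite index of $Q(A,B)$. *)

theory Defs
  imports "Jordan_Normal_Form.Determinant" "HOL-Computational_Algebra.Polynomial"
begin

(* An integral ternary quadratic form A(v) = sum_{1<=i<=j<=3} a i j * v_i * v_j,
   represented by its coefficients a i j (only 1 <= i <= j <= 3 are used). *)
type_synonym tqf = "nat \<Rightarrow> nat \<Rightarrow> int"

definition symc :: "tqf \<Rightarrow> nat \<Rightarrow> nat \<Rightarrow> int" where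
  "symc a i j = (if i \<le> j then a i j else a j i)"

definition tqf_eval :: "tqf \<Rightarrow> (nat \<Rightarrow> rat) \<Rightarrow> rat" where
  "tqf_eval a v = (\<Sum>i\<in>{1..3}. \<Sum>j\<in>{i..3}. of_int (a i j) * v i * v j)"

definition lam :: "tqf \<Rightarrow> tqf \<Rightarrow> nat \<Rightarrow> nat \<Rightarrow> nat \<Rightarrow> nat \<Rightarrow> int" where
  "lam a b i j k l = symc a i j * symc b k l - symc b i j * symc a k l"

definition primitive_pair :: "tqf \<Rightarrow> tqf \<Rightarrow> bool" where
  "primitive_pair a b \<longleftrightarrow>
     Gcd {lam a b i j k l | i j k l. i \<in> {1..3} \<and> j \<in> {1..3} \<and> k \<in> {1..3} \<and> l \<in> {1..3}} = 1"

(* Gram matrix of A (half-integral symmetric matrix with A(v) = v G v^T), 0-indexed *)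
definition gram :: "tqf \<Rightarrow> rat mat" where
  "gram a = mat 3 3 (\<lambda>(i,j). if i = j then of_int (a (i+1) (i+1))
                              else of_int (symc a (i+1) (j+1)) / 2)"

(* 4 det(u1 A - u2 B) dehomogenized at u1 = t, u2 = 1; coefficient of t^k is the
   coefficient of u1^k u2^(3-k) of the binary cubic form *)
definition cubic_poly :: "tqf \<Rightarrow> tqf \<Rightarrow> rat poly" where
  "cubic_poly a b = smult 4 (det (mat 3 3 (\<lambda>(i,j). [:0, gram a $$ (i,j):] - [:gram b $$ (i,j):])))"

(* discriminant of the binary cubic form p3 x^3 + p2 x^2 y + p1 x y^2 + p0 y^3 *)
definition cubic_form_disc :: "rat poly \<Rightarrow> rat" where
  "cubic_form_disc p = (let a = coeff p 3; b = coeff p 2; c = coeff p 1; d = coeff p 0 in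
      b^2 * c^2 - 4 * a * c^3 - 4 * b^3 * d - 27 * a^2 * d^2 + 18 * a * b * c * d)"

definition nondegenerate_pair :: "tqf \<Rightarrow> tqf \<Rightarrow> bool" where
  "nondegenerate_pair a b \<longleftrightarrow> cubic_form_disc (cubic_poly a b) \<noteq> 0"

(* structure constants of Bhargava's quartic ring Q(A,B) *)
definition Cc :: "tqf \<Rightarrow> tqf \<Rightarrow> nat \<Rightarrow> rat" where
  "Cc a b i = of_int (if i = 1 then lam a b 2 3 1 1
                     else if i = 2 then - lam a b 1 3 2 2 else lam a b 1 2 3 3)"

definition nx :: "nat \<Rightarrow> nat" where "nx i = i mod 3 + 1"

(* c_ij^k for i,j,k in {1,2,3}; for i \<noteq> j the remaining index is 6-i-j and the sign
   of the permutation (i,j,6-i-j) is +1 iff j = nx i *)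
definition cnz :: "tqf \<Rightarrow> tqf \<Rightarrow> nat \<Rightarrow> nat \<Rightarrow> nat \<Rightarrow> rat" where
  "cnz a b i j k =
    (let L = (\<lambda>p q r s. of_int (lam a b p q r s) :: rat) in
     if i = j then
       (let j' = nx i; k' = nx j' in
        if k = i then L i k' i j' + Cc a b i
        else if k = j' then L i i i k'
        else - L i i i j')
     else
       (let k' = 6 - i - j; e = (if j = nx i then 1 else -1 :: rat) in
        if k = i then e / 2 * L i k' j j + Cc a b j / 2
        else if k = j then - e / 2 * L j k' i i + Cc a b i / 2
        else e * L j j i i))"

definition c0 :: "tqf \<Rightarrow> tqf \<Rightarrow> nat \<Rightarrow> nat \<Rightarrow> rat" where
  "c0 a b i j = (let k = nx i in
     \<Sum>r\<in>{1..3}. cnz a b j k r * cnz a b r i k - cnz a b i j r * cnz a b r k k)"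

(* full multiplication table on the basis alpha_0 = 1, alpha_1, alpha_2, alpha_3 *)
definition qc :: "tqf \<Rightarrow> tqf \<Rightarrow> nat \<Rightarrow> nat \<Rightarrow> nat \<Rightarrow> rat" where
  "qc a b i j k =
    (if i = 0 then (if j = k then 1 else 0)
     else if j = 0 then (if i = k then 1 else 0)
     else if k = 0 then c0 a b i j
     else cnz a b i j k)"

(* multiplication in Q(A,B) \<otimes> Q, elements as coordinate vectors (indices 0..3) *)
definition qmult :: "tqf \<Rightarrow> tqf \<Rightarrow> (nat \<Rightarrow> rat) \<Rightarrow> (nat \<Rightarrow> rat) \<Rightarrow> nat \<Rightarrow> rat" where
  "qmult a b x y = (\<lambda>k. \<Sum>i<4. \<Sum>j<4. x i * y j * qc a b i j k)"

definition basis4 :: "nat \<Rightarrow> nat \<Rightarrow> rat" where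
  "basis4 i = (\<lambda>k. if k = i then 1 else 0)"

(* Z-linear map Z^4 \<rightarrow> Z^4 given by an integer 4x4 matrix (columns = images of basis) *)
definition lin4 :: "int mat \<Rightarrow> (nat \<Rightarrow> rat) \<Rightarrow> nat \<Rightarrow> rat" where
  "lin4 M x = (\<lambda>k. \<Sum>i<4. of_int (M $$ (k,i)) * x i)"

(* M is an injective ring homomorphism Q(A',B') \<rightarrow> Q(A,B) with image of finite index,
   i.e. exhibits Q(A',B') as a subring of finite index (= |det M|) of Q(A,B) *)
definition quartic_subring_embedding :: "tqf \<Rightarrow> tqf \<Rightarrow> tqf \<Rightarrow> tqf \<Rightarrow> int mat \<Rightarrow> bool" where
  "quartic_subring_embedding a' b' a b M \<longleftrightarrow>
     M \<in> carrier_mat 4 4 \<and> det M \<noteq> 0 \<and>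
     (\<forall>k<4. lin4 M (basis4 0) k = basis4 0 k) \<and>
     (\<forall>i<4. \<forall>j<4. \<forall>k<4.
        lin4 M (qmult a' b' (basis4 i) (basis4 j)) k
          = qmult a b (lin4 M (basis4 i)) (lin4 M (basis4 j)) k)"

(* v \<delta>1, v a row vector indexed 1..3, \<delta>1 a 3x3 matrix (0-indexed in JNF) *)
definition vmul3 :: "(nat \<Rightarrow> rat) \<Rightarrow> int mat \<Rightarrow> nat \<Rightarrow> rat" where
  "vmul3 v d = (\<lambda>j. \<Sum>i\<in>{1..3}. v i * of_int (d $$ (i - 1, j - 1)))"

(* (\<delta>1, g) . (A,B) as a pair of quadratic functions, g = [[p,q],[r,s]] *)
definition pair_act :: "int mat \<Rightarrow> rat mat \<Rightarrow> tqf \<Rightarrow> tqf \<Rightarrow>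
    ((nat \<Rightarrow> rat) \<Rightarrow> rat) \<times> ((nat \<Rightarrow> rat) \<Rightarrow> rat)" where
  "pair_act d g a b =
    (\<lambda>v. g $$ (0,0) * tqf_eval a (vmul3 v d) + g $$ (0,1) * tqf_eval b (vmul3 v d),
     \<lambda>v. g $$ (1,0) * tqf_eval a (vmul3 v d) + g $$ (1,1) * tqf_eval b (vmul3 v d))"

definition inv_rat :: "int mat \<Rightarrow> rat mat" where
  "inv_rat D = smult_mat (1 / det (map_mat of_int D)) (adj_mat (map_mat of_int D))"

end

theory Submission
  imports Defs
begin

lemma lt1: "{..<1::nat} = {0}" and lt2: "{..<2::nat} = {0,1}" and lt3: "{..<3::nat} = {0,1,2}"
  and lt4: "{..<4::nat} = {0,1,2,3}" by auto
lemma det1: assumes "A \<in> carrier_mat 1 1" shows "det A = A $$ (0,0)"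
proof -
  have c: "mat_delete A 0 0 \<in> carrier_mat 0 0" using mat_delete_carrier[OF assms] by simp
  have "det A = (\<Sum>i<1. A $$ (i, 0) * cofactor A i 0)" 
    by (rule laplace_expansion_column[OF assms]) simp
  also have "\<dots> = A $$ (0,0)" using det_dim_zero[OF c] by (simp add: cofactor_def lt1)
  finally show ?thesis .
qed
lemma det2: assumes "A \<in> carrier_mat 2 2" shows "det A = A $$ (0,0) * A $$ (1,1) - A $$ (0,1) * A $$ (1,0)"
proof -
  have c: "\<And>i j. mat_delete A i j \<in> carrier_mat 1 1" using mat_delete_carrier[OF assms] by simp
  have "det A = (\<Sum>i<2. A $$ (i, 0) * cofactor A i 0)" 
    by (rule laplace_expansion_column[OF assms]) simp
  also have "\<dots> = A $$ (0,0) * A $$ (1,1) - A $$ (0,1) * A $$ (1,0)" 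
    unfolding cofactor_def lt2 det1[OF c] using assms by (simp add: mat_delete_def)
  finally show ?thesis .
qed
lemma det3: assumes "A \<in> carrier_mat 3 3" shows "det A =
   A $$ (0,0) * (A $$ (1,1) * A $$ (2,2) - A $$ (1,2) * A $$ (2,1))
 - A $$ (1,0) * (A $$ (0,1) * A $$ (2,2) - A $$ (0,2) * A $$ (2,1))
 + A $$ (2,0) * (A $$ (0,1) * A $$ (1,2) - A $$ (0,2) * A $$ (1,1))" (is "_ = ?r")
proof -
  have c: "\<And>i j. mat_delete A i j \<in> carrier_mat 2 2" using mat_delete_carrier[OF assms] by simp
  have "det A = (\<Sum>i<3. A $$ (i, 0) * cofactor A i 0)" 
    by (rule laplace_expansion_column[OF assms]) simp
  also have "\<dots> = ?r" 
    unfolding cofactor_def lt3 det2[OF c] using assms by (simp add: mat_delete_def eval_nat_numeral algebra_simps)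
  finally show ?thesis .
qed

lemma s13: "{1..3::nat} = {1,2,3}" and s23: "{2..3::nat} = {2,3}" by auto
lemma sum13: "(\<Sum>x\<in>{1..3::nat}. f x) = f 1 + f 2 + f 3"
  unfolding s13 by (simp add: add.assoc)
lemma sum23: "(\<Sum>x\<in>{2..3::nat}. f x) = f 2 + f 3"
  by (simp add: s23)
lemma s4: "{..<4::nat} = {0,1,2,3}" by auto
lemma sum4: "(\<Sum>x<4::nat. f x) = f 0 + f 1 + f 2 + f 3" by (simp add: s4 add.assoc)
lemma sum33: "(\<Sum>x\<in>{3..3::nat}. f x) = f 3" by simp
lemmas sumE = sum13 sum23 sum33

definition Dm :: "int mat \<Rightarrow> nat \<Rightarrow> nat \<Rightarrow> rat" where "Dm M k l = of_int (M $$ (k,l))"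
definition detf :: "(nat \<Rightarrow> nat \<Rightarrow> rat) \<Rightarrow> rat" where
 "detf D = D 1 1 * (D 2 2 * D 3 3 - D 2 3 * D 3 2) - D 2 1 * (D 1 2 * D 3 3 - D 1 3 * D 3 2)
          + D 3 1 * (D 1 2 * D 2 3 - D 1 3 * D 2 2)"
definition adjf :: "(nat \<Rightarrow> nat \<Rightarrow> rat) \<Rightarrow> nat \<Rightarrow> nat \<Rightarrow> rat" where
 "adjf D l k = D (nx k) (nx l) * D (nx (nx k)) (nx (nx l)) - D (nx k) (nx (nx l)) * D (nx (nx k)) (nx l)"
definition Rf :: "tqf \<Rightarrow> tqf \<Rightarrow> int mat \<Rightarrow> nat \<Rightarrow> nat \<Rightarrow> nat \<Rightarrow> rat" where
 "Rf a b M i j k = Dm M 0 i * Dm M k j + Dm M 0 j * Dm M k i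
    + (\<Sum>m\<in>{1..3}. \<Sum>n\<in>{1..3}. Dm M m i * Dm M n j * cnz a b m n k)"
definition Xf :: "tqf \<Rightarrow> tqf \<Rightarrow> int mat \<Rightarrow> nat \<Rightarrow> nat \<Rightarrow> nat \<Rightarrow> rat" where
 "Xf a b M i j l = (\<Sum>k\<in>{1..3}. adjf (Dm M) l k * Rf a b M i j k)"
definition tr1 :: "int mat \<Rightarrow> tqf \<Rightarrow> tqf" where
 "tr1 M a i j = (if i = j then (\<Sum>m\<in>{1..3}. \<Sum>n\<in>{m..3}. a m n * M$$(m,i) * M$$(n,i))
     else (\<Sum>m\<in>{1..3}. \<Sum>n\<in>{m..3}. a m n * (M$$(m,i)*M$$(n,j) + M$$(m,j)*M$$(n,i))))"

lemma nx1: "nx 1 = 2" and nx2: "nx 2 = 3" and nx3: "nx 3 = 1" by (simp_all add: nx_def)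
lemmas unf = Xf_def Rf_def adjf_def nx1 nx2 nx3 cnz_def Cc_def Let_def lam_def symc_def tr1_def Dm_def sumE

lemma qmult_basis: assumes "i < 4" "j < 4"
  shows "qmult a b (basis4 i) (basis4 j) k = qc a b i j k"
proof -
  have "i = 0 \<or> i = 1 \<or> i = 2 \<or> i = 3" "j = 0 \<or> j = 1 \<or> j = 2 \<or> j = 3" using assms by auto
  thus ?thesis unfolding qmult_def basis4_def sum4 by auto
qed

lemma lin4_basis: assumes "i < 4" shows "lin4 M (basis4 i) k = of_int (M $$ (k,i))"
proof -
  have "lin4 M (basis4 i) k = (\<Sum>i'<4. if i' = i then of_int (M $$ (k,i')) else 0)"
    unfolding lin4_def basis4_def by (intro sum.cong refl) auto
  also have "\<dots> = of_int (M $$ (k,i))" using assms by (simp add: sum.delta)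
  finally show ?thesis .
qed

lemma lin4_fun: "lin4 M f k = (\<Sum>l<4. Dm M k l * f l)"
  unfolding lin4_def Dm_def by simp

lemma hom_eq:
  assumes emb: "quartic_subring_embedding a' b' a b M"
    and i: "i \<in> {1,2,3}" and j: "j \<in> {1,2,3}" and k: "k \<in> {1,2,3}"
  shows "Dm M k 1 * cnz a' b' i j 1 + Dm M k 2 * cnz a' b' i j 2 + Dm M k 3 * cnz a' b' i j 3
         = Rf a b M i j k"
proof -
  have col0: "Dm M k 0 = 0"
  proof -
    have "lin4 M (basis4 0) k = basis4 0 k" using emb k unfolding quartic_subring_embedding_def by auto
    moreover have "lin4 M (basis4 0) k = of_int (M$$(k,0))" by (rule lin4_basis) simp
    ultimately show ?thesis using k by (auto simp add: Dm_def basis4_def)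
  qed
  have h: "lin4 M (qmult a' b' (basis4 i) (basis4 j)) k
          = qmult a b (lin4 M (basis4 i)) (lin4 M (basis4 j)) k"
    using emb i j k unfolding quartic_subring_embedding_def by auto
  have L: "lin4 M (qmult a' b' (basis4 i) (basis4 j)) k
     = Dm M k 1 * cnz a' b' i j 1 + Dm M k 2 * cnz a' b' i j 2 + Dm M k 3 * cnz a' b' i j 3"
  proof -
    have "qmult a' b' (basis4 i) (basis4 j) = qc a' b' i j"
      using i j by (intro ext qmult_basis) auto
    moreover have "i \<noteq> 0" "j \<noteq> 0" using i j by auto
    ultimately show ?thesis using col0 by (simp add: lin4_fun sum4 qc_def add.assoc)
  qed
  have li: "lin4 M (basis4 i) = (\<lambda>m. Dm M m i)" using i by (intro ext) (auto simp add: lin4_basis Dm_def)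
  have lj: "lin4 M (basis4 j) = (\<lambda>m. Dm M m j)" using j by (intro ext) (auto simp add: lin4_basis Dm_def)
  have R: "qmult a b (\<lambda>m. Dm M m i) (\<lambda>m. Dm M m j) k = Rf a b M i j k"
    using k unfolding qmult_def Rf_def sum4 sum13 qc_def by (auto simp: algebra_simps)
  show ?thesis using h L R li lj by simp
qed

lemma cramer: fixes D :: "nat \<Rightarrow> nat \<Rightarrow> rat"
  assumes h: "\<And>k. k \<in> {1,2,3} \<Longrightarrow> D k 1 * x 1 + D k 2 * x 2 + D k 3 * x 3 = r k"
    and l: "l \<in> {1,2,3}"
  shows "detf D * x l = adjf D l 1 * r 1 + adjf D l 2 * r 2 + adjf D l 3 * r 3"
proof -
  have r1: "r 1 = D 1 1 * x 1 + D 1 2 * x 2 + D 1 3 * x 3" using h[of 1] by simp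
  have r2: "r 2 = D 2 1 * x 1 + D 2 2 * x 2 + D 2 3 * x 3" using h[of 2] by simp
  have r3: "r 3 = D 3 1 * x 1 + D 3 2 * x 2 + D 3 3 * x 3" using h[of 3] by simp
  have "detf D * x 1 = adjf D 1 1 * r 1 + adjf D 1 2 * r 2 + adjf D 1 3 * r 3"
       "detf D * x 2 = adjf D 2 1 * r 1 + adjf D 2 2 * r 2 + adjf D 2 3 * r 3"
       "detf D * x 3 = adjf D 3 1 * r 1 + adjf D 3 2 * r 2 + adjf D 3 3 * r 3"
    unfolding r1 r2 r3 adjf_def detf_def nx1 nx2 nx3 by (simp_all add: algebra_simps)
  thus ?thesis using l by auto
qed

lemma key:
  assumes emb: "quartic_subring_embedding a' b' a b M"
    and i: "i \<in> {1,2,3}" and j: "j \<in> {1,2,3}" and l: "l \<in> {1,2,3}"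
  shows "detf (Dm M) * cnz a' b' i j l = Xf a b M i j l"
proof -
  have "detf (Dm M) * cnz a' b' i j l = adjf (Dm M) l 1 * Rf a b M i j 1 + adjf (Dm M) l 2 * Rf a b M i j 2 + adjf (Dm M) l 3 * Rf a b M i j 3"
    by (rule cramer[OF hom_eq[OF emb i j] l])
  thus ?thesis unfolding Xf_def sum13 .
qed

abbreviation "S3 \<equiv> {1,2,3::nat}"

lemma aux1: fixes x y c N :: int shows "x - y + c * N = 0 \<Longrightarrow> N * c = y - x"
  by (simp add: algebra_simps)
lemma aux_id: fixes zu zw zz au aw az bu bw bz :: int
  shows "zw * (au * bz - bu * az) - zu * (aw * bz - bw * az) = (zu * bw - bu * zw) * az + (au * zw - zu * aw) * bz"
  by (simp add: algebra_simps)
lemma aux2: fixes N P Q ze zf ae af be bf :: int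
  assumes "N * ze = P * ae + Q * be" "N * zf = P * af + Q * bf"
  shows "N * (ze * bf - be * zf) = P * (ae * bf - be * af)"
proof -
  have "N * (ze * bf - be * zf) = (N * ze) * bf - be * (N * zf)" by (simp add: algebra_simps)
  also have "\<dots> = (P * ae + Q * be) * bf - be * (P * af + Q * bf)" unfolding assms ..
  finally show ?thesis by (simp add: algebra_simps)
qed
lemma aux3: fixes N P Q ze zf ae af be bf :: int
  assumes "N * ze = P * ae + Q * be" "N * zf = P * af + Q * bf"
  shows "N * (ae * zf - ze * af) = Q * (ae * bf - be * af)"
proof -
  have "N * (ae * zf - ze * af) = ae * (N * zf) - (N * ze) * af" by (simp add: algebra_simps)
  also have "\<dots> = ae * (P * af + Q * bf) - (P * ae + Q * be) * af" unfolding assms ..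
  finally show ?thesis by (simp add: algebra_simps)
qed
lemma aux4: fixes n xu xw xz lwz luz luw :: int
  shows "n * (xu * lwz - xw * luz + xz * luw) = xu * (n * lwz) - xw * (n * luz) + xz * (n * luw)"
  by (simp add: algebra_simps)
lemma aux5: fixes xu xw xz yu yw yz :: int
  shows "xu * (xw * yz - yw * xz) - xw * (xu * yz - yu * xz) + xz * (xu * yw - yu * xw) = 0"
  by (simp add: algebra_simps)
lemma aux5Y: fixes xu xw xz yu yw yz :: int
  shows "yu * (xw * yz - yw * xz) - yw * (xu * yz - yu * xz) + yz * (xu * yw - yu * xw) = 0"
  by (simp add: algebra_simps)
lemma aux6: fixes p q r s au aw bu bw :: int
  shows "(p * au + q * bu) * (r * aw + s * bw) - (r * au + s * bu) * (p * aw + q * bw) = (p * s - q * r) * (au * bw - bu * aw)"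
  by (simp add: algebra_simps)

lemma lam_set_nonzero:
  assumes "primitive_pair A B"
  obtains u1 u2 w1 w2 where "u1 \<in> S3" "u2 \<in> S3" "w1 \<in> S3" "w2 \<in> S3" "lam A B u1 u2 w1 w2 \<noteq> 0"
proof -
  let ?L = "{lam A B i j k l | i j k l. i \<in> {1..3} \<and> j \<in> {1..3} \<and> k \<in> {1..3} \<and> l \<in> {1..3}}"
  have "Gcd ?L = 1" using assms unfolding primitive_pair_def by simp
  hence "\<not> ?L \<subseteq> {0}" using Gcd_0_iff[of ?L] by simp
  then obtain x where "x \<in> ?L" "x \<noteq> 0" by blast
  then obtain i j k l where "i \<in> {1..3}" "j \<in> {1..3}" "k \<in> {1..3}" "l \<in> {1..3}" "lam A B i j k l \<noteq> 0" by blast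
  moreover have "{1..3::nat} = S3" by auto
  ultimately show ?thesis using that by blast
qed

lemma dvd_from_gcd:
  fixes N P :: int
  assumes prim: "primitive_pair A B"
    and h: "\<And>i j k l. i \<in> S3 \<Longrightarrow> j \<in> S3 \<Longrightarrow> k \<in> S3 \<Longrightarrow> l \<in> S3 \<Longrightarrow> N dvd P * lam A B i j k l"
  shows "N dvd P"
proof -
  let ?L = "{lam A B i j k l | i j k l. i \<in> {1..3} \<and> j \<in> {1..3} \<and> k \<in> {1..3} \<and> l \<in> {1..3}}"
  have g: "Gcd ?L = 1" using prim unfolding primitive_pair_def by simp
  have s: "{1..3::nat} = S3" by auto
  have "N dvd Gcd ((*) P ` ?L)"
  proof (rule Gcd_greatest)
    fix y assume "y \<in> (*) P ` ?L"
    then obtain i j k l where "i \<in> {1..3}" "j \<in> {1..3}" "k \<in> {1..3}" "l \<in> {1..3}" "y = P * lam A B i j k l" by blast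
    moreover have "i \<in> S3" "j \<in> S3" "k \<in> S3" "l \<in> S3" using calculation(1-4) s by blast+
    ultimately show "N dvd y" using h by blast
  qed
  also have "Gcd ((*) P ` ?L) = normalize P" using g by (simp add: Gcd_mult)
  finally show ?thesis by simp
qed

lemma span_one:
  fixes N :: int and A B Z :: tqf
  assumes prim: "primitive_pair A B"
    and u1: "u1 \<in> S3" and u2: "u2 \<in> S3" and w1: "w1 \<in> S3" and w2: "w2 \<in> S3"
    and N: "lam A B u1 u2 w1 w2 \<noteq> 0"
    and plk: "\<And>z1 z2. z1 \<in> S3 \<Longrightarrow> z2 \<in> S3 \<Longrightarrow>
        symc Z u1 u2 * lam A B w1 w2 z1 z2 - symc Z w1 w2 * lam A B u1 u2 z1 z2
        + symc Z z1 z2 * lam A B u1 u2 w1 w2 = 0"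
  shows "\<exists>p q. \<forall>z1\<in>S3. \<forall>z2\<in>S3. symc Z z1 z2 = p * symc A z1 z2 + q * symc B z1 z2"
proof -
  define NN where "NN = lam A B u1 u2 w1 w2"
  define P where "P = lam Z B u1 u2 w1 w2"
  define Q where "Q = lam A Z u1 u2 w1 w2"
  have lin: "NN * symc Z z1 z2 = P * symc A z1 z2 + Q * symc B z1 z2" if "z1 \<in> S3" "z2 \<in> S3" for z1 z2
  proof -
    have "symc Z u1 u2 * lam A B w1 w2 z1 z2 - symc Z w1 w2 * lam A B u1 u2 z1 z2
        + symc Z z1 z2 * NN = 0" using plk[OF that] unfolding NN_def .
    hence "NN * symc Z z1 z2 = symc Z w1 w2 * lam A B u1 u2 z1 z2 - symc Z u1 u2 * lam A B w1 w2 z1 z2"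
      by (rule aux1)
    also have "\<dots> = P * symc A z1 z2 + Q * symc B z1 z2"
      unfolding P_def Q_def lam_def by (rule aux_id)
    finally show ?thesis .
  qed
  have dP: "NN dvd P"
  proof (rule dvd_from_gcd[OF prim])
    fix e1 e2 f1 f2 assume e: "e1 \<in> S3" "e2 \<in> S3" "f1 \<in> S3" "f2 \<in> S3"
    have "NN * lam Z B e1 e2 f1 f2 = P * lam A B e1 e2 f1 f2"
      unfolding lam_def by (rule aux2[OF lin[OF e(1,2)] lin[OF e(3,4)]])
    thus "NN dvd P * lam A B e1 e2 f1 f2" by (metis dvd_triv_left)
  qed
  have dQ: "NN dvd Q"
  proof (rule dvd_from_gcd[OF prim])
    fix e1 e2 f1 f2 assume e: "e1 \<in> S3" "e2 \<in> S3" "f1 \<in> S3" "f2 \<in> S3"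
    have "NN * lam A Z e1 e2 f1 f2 = Q * lam A B e1 e2 f1 f2"
      unfolding lam_def by (rule aux3[OF lin[OF e(1,2)] lin[OF e(3,4)]])
    thus "NN dvd Q * lam A B e1 e2 f1 f2" by (metis dvd_triv_left)
  qed
  obtain p where p: "P = NN * p" using dP by (elim dvdE)
  obtain q where q: "Q = NN * q" using dQ by (elim dvdE)
  have NN0: "NN \<noteq> 0" using N NN_def by simp
  show ?thesis
  proof (intro exI ballI)
    fix z1 z2 assume z: "z1 \<in> S3" "z2 \<in> S3"
    have "NN * symc Z z1 z2 = NN * (p * symc A z1 z2 + q * symc B z1 z2)"
      using lin[OF z] unfolding p q by (simp add: algebra_simps)
    thus "symc Z z1 z2 = p * symc A z1 z2 + q * symc B z1 z2" using NN0 by simp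
  qed
qed

lemma pencil:
  fixes n :: int and A B X Y :: tqf
  assumes n: "n \<noteq> 0"
    and rel: "\<And>i j k l. i \<in> S3 \<Longrightarrow> j \<in> S3 \<Longrightarrow> k \<in> S3 \<Longrightarrow> l \<in> S3 \<Longrightarrow>
                n * lam A B i j k l = lam X Y i j k l"
    and prim: "primitive_pair A B"
  shows "\<exists>p q r s. (\<forall>i\<in>S3. \<forall>j\<in>S3. symc X i j = p * symc A i j + q * symc B i j
                                     \<and> symc Y i j = r * symc A i j + s * symc B i j) \<and> p * s - q * r = n"
proof -
  obtain u1 u2 w1 w2 where u: "u1 \<in> S3" "u2 \<in> S3" "w1 \<in> S3" "w2 \<in> S3"
    and N: "lam A B u1 u2 w1 w2 \<noteq> 0" using lam_set_nonzero[OF prim] by blast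
  have plkX: "symc X u1 u2 * lam A B w1 w2 z1 z2 - symc X w1 w2 * lam A B u1 u2 z1 z2
        + symc X z1 z2 * lam A B u1 u2 w1 w2 = 0" if z: "z1 \<in> S3" "z2 \<in> S3" for z1 z2
  proof -
    have "n * (symc X u1 u2 * lam A B w1 w2 z1 z2 - symc X w1 w2 * lam A B u1 u2 z1 z2
        + symc X z1 z2 * lam A B u1 u2 w1 w2) =
        symc X u1 u2 * lam X Y w1 w2 z1 z2 - symc X w1 w2 * lam X Y u1 u2 z1 z2
        + symc X z1 z2 * lam X Y u1 u2 w1 w2"
      unfolding aux4 rel[OF u(3,4) z] rel[OF u(1,2) z] rel[OF u] ..
    also have "\<dots> = 0" unfolding lam_def by (rule aux5)
    finally show ?thesis using n by simp
  qed
  have plkY: "symc Y u1 u2 * lam A B w1 w2 z1 z2 - symc Y w1 w2 * lam A B u1 u2 z1 z2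
        + symc Y z1 z2 * lam A B u1 u2 w1 w2 = 0" if z: "z1 \<in> S3" "z2 \<in> S3" for z1 z2
  proof -
    have "n * (symc Y u1 u2 * lam A B w1 w2 z1 z2 - symc Y w1 w2 * lam A B u1 u2 z1 z2
        + symc Y z1 z2 * lam A B u1 u2 w1 w2) =
        symc Y u1 u2 * lam X Y w1 w2 z1 z2 - symc Y w1 w2 * lam X Y u1 u2 z1 z2
        + symc Y z1 z2 * lam X Y u1 u2 w1 w2"
      unfolding aux4 rel[OF u(3,4) z] rel[OF u(1,2) z] rel[OF u] ..
    also have "\<dots> = 0" unfolding lam_def by (rule aux5Y)
    finally show ?thesis using n by simp
  qed
  obtain p q where pq: "\<forall>z1\<in>S3. \<forall>z2\<in>S3. symc X z1 z2 = p * symc A z1 z2 + q * symc B z1 z2"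
    using span_one[OF prim u N plkX] by blast
  obtain r s where rs: "\<forall>z1\<in>S3. \<forall>z2\<in>S3. symc Y z1 z2 = r * symc A z1 z2 + s * symc B z1 z2"
    using span_one[OF prim u N plkY] by blast
  have "n * lam A B u1 u2 w1 w2 = lam X Y u1 u2 w1 w2" using rel[OF u] .
  also have "\<dots> = (p * s - q * r) * lam A B u1 u2 w1 w2"
  proof -
    have xu: "symc X u1 u2 = p * symc A u1 u2 + q * symc B u1 u2" using pq u by blast
    have xw: "symc X w1 w2 = p * symc A w1 w2 + q * symc B w1 w2" using pq u by blast
    have yu: "symc Y u1 u2 = r * symc A u1 u2 + s * symc B u1 u2" using rs u by blast
    have yw: "symc Y w1 w2 = r * symc A w1 w2 + s * symc B w1 w2" using rs u by blast
    show ?thesis unfolding lam_def xu xw yu yw by (rule aux6)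
  qed
  finally have "p * s - q * r = n" using N by simp
  thus ?thesis using pq rs by blast
qed

lemma ell0: "of_int (lam a b 2 2 1 1) = cnz a b 1 2 3"
  by (simp del: One_nat_def add: One_nat_def[symmetric] cnz_def Cc_def lam_def symc_def Let_def nx_def)
lemma big0: "Xf a b M 1 2 3 = of_int (lam (tr1 M a) (tr1 M b) 2 2 1 1)"
  unfolding unf apply (simp del: One_nat_def add: One_nat_def[symmetric])
  by (simp add: field_simps)
lemma rel0: assumes emb: "quartic_subring_embedding a' b' a b M"
  shows "detf (Dm M) * of_int (lam a' b' 2 2 1 1) = of_int (lam (tr1 M a) (tr1 M b) 2 2 1 1)"
proof -
  have k: "\<And>i j l. i \<in> {1,2,3} \<Longrightarrow> j \<in> {1,2,3} \<Longrightarrow> l \<in> {1,2,3} \<Longrightarrow> detf (Dm M) * cnz a' b' i j l = Xf a b M i j l"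
    by (rule key[OF emb])
  show ?thesis unfolding ell0[of a' b'] big0[symmetric] by (simp add: k ring_distribs)
qed

lemma ell1: "of_int (lam a b 3 3 1 1) = - cnz a b 1 3 2"
  by (simp del: One_nat_def add: One_nat_def[symmetric] cnz_def Cc_def lam_def symc_def Let_def nx_def)
lemma big1: "- Xf a b M 1 3 2 = of_int (lam (tr1 M a) (tr1 M b) 3 3 1 1)"
  unfolding unf apply (simp del: One_nat_def add: One_nat_def[symmetric])
  by (simp add: field_simps)
lemma rel1: assumes emb: "quartic_subring_embedding a' b' a b M"
  shows "detf (Dm M) * of_int (lam a' b' 3 3 1 1) = of_int (lam (tr1 M a) (tr1 M b) 3 3 1 1)"
proof -
  have k: "\<And>i j l. i \<in> {1,2,3} \<Longrightarrow> j \<in> {1,2,3} \<Longrightarrow> l \<in> {1,2,3} \<Longrightarrow> detf (Dm M) * cnz a' b' i j l = Xf a b M i j l"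
    by (rule key[OF emb])
  show ?thesis unfolding ell1[of a' b'] big1[symmetric] by (simp add: k ring_distribs)
qed

lemma ell2: "of_int (lam a b 3 3 2 2) = cnz a b 2 3 1"
  by (simp del: One_nat_def add: One_nat_def[symmetric] cnz_def Cc_def lam_def symc_def Let_def nx_def)
lemma big2: "Xf a b M 2 3 1 = of_int (lam (tr1 M a) (tr1 M b) 3 3 2 2)"
  unfolding unf apply (simp del: One_nat_def add: One_nat_def[symmetric])
  by (simp add: field_simps)
lemma rel2: assumes emb: "quartic_subring_embedding a' b' a b M"
  shows "detf (Dm M) * of_int (lam a' b' 3 3 2 2) = of_int (lam (tr1 M a) (tr1 M b) 3 3 2 2)"
proof -
  have k: "\<And>i j l. i \<in> {1,2,3} \<Longrightarrow> j \<in> {1,2,3} \<Longrightarrow> l \<in> {1,2,3} \<Longrightarrow> detf (Dm M) * cnz a' b' i j l = Xf a b M i j l"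
    by (rule key[OF emb])
  show ?thesis unfolding ell2[of a' b'] big2[symmetric] by (simp add: k ring_distribs)
qed

lemma ell3: "of_int (lam a b 1 1 1 3) = cnz a b 1 1 2"
  by (simp del: One_nat_def add: One_nat_def[symmetric] cnz_def Cc_def lam_def symc_def Let_def nx_def)
lemma big3: "Xf a b M 1 1 2 = of_int (lam (tr1 M a) (tr1 M b) 1 1 1 3)"
  unfolding unf apply (simp del: One_nat_def add: One_nat_def[symmetric])
  by (simp add: field_simps)
lemma rel3: assumes emb: "quartic_subring_embedding a' b' a b M"
  shows "detf (Dm M) * of_int (lam a' b' 1 1 1 3) = of_int (lam (tr1 M a) (tr1 M b) 1 1 1 3)"
proof -
  have k: "\<And>i j l. i \<in> {1,2,3} \<Longrightarrow> j \<in> {1,2,3} \<Longrightarrow> l \<in> {1,2,3} \<Longrightarrow> detf (Dm M) * cnz a' b' i j l = Xf a b M i j l"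
    by (rule key[OF emb])
  show ?thesis unfolding ell3[of a' b'] big3[symmetric] by (simp add: k ring_distribs)
qed

lemma ell4: "of_int (lam a b 1 1 1 2) = - cnz a b 1 1 3"
  by (simp del: One_nat_def add: One_nat_def[symmetric] cnz_def Cc_def lam_def symc_def Let_def nx_def)
lemma big4: "- Xf a b M 1 1 3 = of_int (lam (tr1 M a) (tr1 M b) 1 1 1 2)"
  unfolding unf apply (simp del: One_nat_def add: One_nat_def[symmetric])
  by (simp add: field_simps)
lemma rel4: assumes emb: "quartic_subring_embedding a' b' a b M"
  shows "detf (Dm M) * of_int (lam a' b' 1 1 1 2) = of_int (lam (tr1 M a) (tr1 M b) 1 1 1 2)"
proof -
  have k: "\<And>i j l. i \<in> {1,2,3} \<Longrightarrow> j \<in> {1,2,3} \<Longrightarrow> l \<in> {1,2,3} \<Longrightarrow> detf (Dm M) * cnz a' b' i j l = Xf a b M i j l"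
    by (rule key[OF emb])
  show ?thesis unfolding ell4[of a' b'] big4[symmetric] by (simp add: k ring_distribs)
qed

lemma ell5: "of_int (lam a b 2 2 2 1) = cnz a b 2 2 3"
  by (simp del: One_nat_def add: One_nat_def[symmetric] cnz_def Cc_def lam_def symc_def Let_def nx_def)
lemma big5: "Xf a b M 2 2 3 = of_int (lam (tr1 M a) (tr1 M b) 2 2 2 1)"
  unfolding unf apply (simp del: One_nat_def add: One_nat_def[symmetric])
  by (simp add: field_simps)
lemma rel5: assumes emb: "quartic_subring_embedding a' b' a b M"
  shows "detf (Dm M) * of_int (lam a' b' 2 2 2 1) = of_int (lam (tr1 M a) (tr1 M b) 2 2 2 1)"
proof -
  have k: "\<And>i j l. i \<in> {1,2,3} \<Longrightarrow> j \<in> {1,2,3} \<Longrightarrow> l \<in> {1,2,3} \<Longrightarrow> detf (Dm M) * cnz a' b' i j l = Xf a b M i j l"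
    by (rule key[OF emb])
  show ?thesis unfolding ell5[of a' b'] big5[symmetric] by (simp add: k ring_distribs)
qed

lemma ell6: "of_int (lam a b 2 2 2 3) = - cnz a b 2 2 1"
  by (simp del: One_nat_def add: One_nat_def[symmetric] cnz_def Cc_def lam_def symc_def Let_def nx_def)
lemma big6: "- Xf a b M 2 2 1 = of_int (lam (tr1 M a) (tr1 M b) 2 2 2 3)"
  unfolding unf apply (simp del: One_nat_def add: One_nat_def[symmetric])
  by (simp add: field_simps)
lemma rel6: assumes emb: "quartic_subring_embedding a' b' a b M"
  shows "detf (Dm M) * of_int (lam a' b' 2 2 2 3) = of_int (lam (tr1 M a) (tr1 M b) 2 2 2 3)"
proof -
  have k: "\<And>i j l. i \<in> {1,2,3} \<Longrightarrow> j \<in> {1,2,3} \<Longrightarrow> l \<in> {1,2,3} \<Longrightarrow> detf (Dm M) * cnz a' b' i j l = Xf a b M i j l"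
    by (rule key[OF emb])
  show ?thesis unfolding ell6[of a' b'] big6[symmetric] by (simp add: k ring_distribs)
qed

lemma ell7: "of_int (lam a b 3 3 3 2) = cnz a b 3 3 1"
  by (simp del: One_nat_def add: One_nat_def[symmetric] cnz_def Cc_def lam_def symc_def Let_def nx_def)
lemma big7: "Xf a b M 3 3 1 = of_int (lam (tr1 M a) (tr1 M b) 3 3 3 2)"
  unfolding unf apply (simp del: One_nat_def add: One_nat_def[symmetric])
  by (simp add: field_simps)
lemma rel7: assumes emb: "quartic_subring_embedding a' b' a b M"
  shows "detf (Dm M) * of_int (lam a' b' 3 3 3 2) = of_int (lam (tr1 M a) (tr1 M b) 3 3 3 2)"
proof -
  have k: "\<And>i j l. i \<in> {1,2,3} \<Longrightarrow> j \<in> {1,2,3} \<Longrightarrow> l \<in> {1,2,3} \<Longrightarrow> detf (Dm M) * cnz a' b' i j l = Xf a b M i j l"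
    by (rule key[OF emb])
  show ?thesis unfolding ell7[of a' b'] big7[symmetric] by (simp add: k ring_distribs)
qed

lemma ell8: "of_int (lam a b 3 3 3 1) = - cnz a b 3 3 2"
  by (simp del: One_nat_def add: One_nat_def[symmetric] cnz_def Cc_def lam_def symc_def Let_def nx_def)
lemma big8: "- Xf a b M 3 3 2 = of_int (lam (tr1 M a) (tr1 M b) 3 3 3 1)"
  unfolding unf apply (simp del: One_nat_def add: One_nat_def[symmetric])
  by (simp add: field_simps)
lemma rel8: assumes emb: "quartic_subring_embedding a' b' a b M"
  shows "detf (Dm M) * of_int (lam a' b' 3 3 3 1) = of_int (lam (tr1 M a) (tr1 M b) 3 3 3 1)"
proof -
  have k: "\<And>i j l. i \<in> {1,2,3} \<Longrightarrow> j \<in> {1,2,3} \<Longrightarrow> l \<in> {1,2,3} \<Longrightarrow> detf (Dm M) * cnz a' b' i j l = Xf a b M i j l"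
    by (rule key[OF emb])
  show ?thesis unfolding ell8[of a' b'] big8[symmetric] by (simp add: k ring_distribs)
qed

lemma ell9: "of_int (lam a b 1 3 1 2) = cnz a b 1 1 1 - cnz a b 2 1 2 - cnz a b 3 1 3"
  by (simp del: One_nat_def add: One_nat_def[symmetric] cnz_def Cc_def lam_def symc_def Let_def nx_def)
lemma big9: "Xf a b M 1 1 1 - Xf a b M 2 1 2 - Xf a b M 3 1 3 = of_int (lam (tr1 M a) (tr1 M b) 1 3 1 2)"
  unfolding unf apply (simp del: One_nat_def add: One_nat_def[symmetric])
  by (simp add: field_simps)
lemma rel9: assumes emb: "quartic_subring_embedding a' b' a b M"
  shows "detf (Dm M) * of_int (lam a' b' 1 3 1 2) = of_int (lam (tr1 M a) (tr1 M b) 1 3 1 2)"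
proof -
  have k: "\<And>i j l. i \<in> {1,2,3} \<Longrightarrow> j \<in> {1,2,3} \<Longrightarrow> l \<in> {1,2,3} \<Longrightarrow> detf (Dm M) * cnz a' b' i j l = Xf a b M i j l"
    by (rule key[OF emb])
  show ?thesis unfolding ell9[of a' b'] big9[symmetric] by (simp add: k ring_distribs)
qed

lemma ell10: "of_int (lam a b 2 1 2 3) = cnz a b 2 2 2 - cnz a b 3 2 3 - cnz a b 1 2 1"
  by (simp del: One_nat_def add: One_nat_def[symmetric] cnz_def Cc_def lam_def symc_def Let_def nx_def)
lemma big10: "Xf a b M 2 2 2 - Xf a b M 3 2 3 - Xf a b M 1 2 1 = of_int (lam (tr1 M a) (tr1 M b) 2 1 2 3)"
  unfolding unf apply (simp del: One_nat_def add: One_nat_def[symmetric])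
  by (simp add: field_simps)
lemma rel10: assumes emb: "quartic_subring_embedding a' b' a b M"
  shows "detf (Dm M) * of_int (lam a' b' 2 1 2 3) = of_int (lam (tr1 M a) (tr1 M b) 2 1 2 3)"
proof -
  have k: "\<And>i j l. i \<in> {1,2,3} \<Longrightarrow> j \<in> {1,2,3} \<Longrightarrow> l \<in> {1,2,3} \<Longrightarrow> detf (Dm M) * cnz a' b' i j l = Xf a b M i j l"
    by (rule key[OF emb])
  show ?thesis unfolding ell10[of a' b'] big10[symmetric] by (simp add: k ring_distribs)
qed

lemma ell11: "of_int (lam a b 3 2 3 1) = cnz a b 3 3 3 - cnz a b 1 3 1 - cnz a b 2 3 2"
  by (simp del: One_nat_def add: One_nat_def[symmetric] cnz_def Cc_def lam_def symc_def Let_def nx_def)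
lemma big11: "Xf a b M 3 3 3 - Xf a b M 1 3 1 - Xf a b M 2 3 2 = of_int (lam (tr1 M a) (tr1 M b) 3 2 3 1)"
  unfolding unf apply (simp del: One_nat_def add: One_nat_def[symmetric])
  by (simp add: field_simps)
lemma rel11: assumes emb: "quartic_subring_embedding a' b' a b M"
  shows "detf (Dm M) * of_int (lam a' b' 3 2 3 1) = of_int (lam (tr1 M a) (tr1 M b) 3 2 3 1)"
proof -
  have k: "\<And>i j l. i \<in> {1,2,3} \<Longrightarrow> j \<in> {1,2,3} \<Longrightarrow> l \<in> {1,2,3} \<Longrightarrow> detf (Dm M) * cnz a' b' i j l = Xf a b M i j l"
    by (rule key[OF emb])
  show ?thesis unfolding ell11[of a' b'] big11[symmetric] by (simp add: k ring_distribs)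
qed

lemma ell12: "of_int (lam a b 2 3 1 1) = cnz a b 3 1 3 - cnz a b 2 1 2"
  by (simp del: One_nat_def add: One_nat_def[symmetric] cnz_def Cc_def lam_def symc_def Let_def nx_def)
lemma big12: "Xf a b M 3 1 3 - Xf a b M 2 1 2 = of_int (lam (tr1 M a) (tr1 M b) 2 3 1 1)"
  unfolding unf apply (simp del: One_nat_def add: One_nat_def[symmetric])
  by (simp add: field_simps)
lemma rel12: assumes emb: "quartic_subring_embedding a' b' a b M"
  shows "detf (Dm M) * of_int (lam a' b' 2 3 1 1) = of_int (lam (tr1 M a) (tr1 M b) 2 3 1 1)"
proof -
  have k: "\<And>i j l. i \<in> {1,2,3} \<Longrightarrow> j \<in> {1,2,3} \<Longrightarrow> l \<in> {1,2,3} \<Longrightarrow> detf (Dm M) * cnz a' b' i j l = Xf a b M i j l"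
    by (rule key[OF emb])
  show ?thesis unfolding ell12[of a' b'] big12[symmetric] by (simp add: k ring_distribs)
qed

lemma ell13: "of_int (lam a b 1 3 2 2) = cnz a b 1 2 1 - cnz a b 3 2 3"
  by (simp del: One_nat_def add: One_nat_def[symmetric] cnz_def Cc_def lam_def symc_def Let_def nx_def)
lemma big13: "Xf a b M 1 2 1 - Xf a b M 3 2 3 = of_int (lam (tr1 M a) (tr1 M b) 1 3 2 2)"
  unfolding unf apply (simp del: One_nat_def add: One_nat_def[symmetric])
  by (simp add: field_simps)
lemma rel13: assumes emb: "quartic_subring_embedding a' b' a b M"
  shows "detf (Dm M) * of_int (lam a' b' 1 3 2 2) = of_int (lam (tr1 M a) (tr1 M b) 1 3 2 2)"
proof -
  have k: "\<And>i j l. i \<in> {1,2,3} \<Longrightarrow> j \<in> {1,2,3} \<Longrightarrow> l \<in> {1,2,3} \<Longrightarrow> detf (Dm M) * cnz a' b' i j l = Xf a b M i j l"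
    by (rule key[OF emb])
  show ?thesis unfolding ell13[of a' b'] big13[symmetric] by (simp add: k ring_distribs)
qed

lemma ell14: "of_int (lam a b 1 2 3 3) = cnz a b 2 3 2 - cnz a b 1 3 1"
  by (simp del: One_nat_def add: One_nat_def[symmetric] cnz_def Cc_def lam_def symc_def Let_def nx_def)
lemma big14: "Xf a b M 2 3 2 - Xf a b M 1 3 1 = of_int (lam (tr1 M a) (tr1 M b) 1 2 3 3)"
  unfolding unf apply (simp del: One_nat_def add: One_nat_def[symmetric])
  by (simp add: field_simps)
lemma rel14: assumes emb: "quartic_subring_embedding a' b' a b M"
  shows "detf (Dm M) * of_int (lam a' b' 1 2 3 3) = of_int (lam (tr1 M a) (tr1 M b) 1 2 3 3)"
proof -
  have k: "\<And>i j l. i \<in> {1,2,3} \<Longrightarrow> j \<in> {1,2,3} \<Longrightarrow> l \<in> {1,2,3} \<Longrightarrow> detf (Dm M) * cnz a' b' i j l = Xf a b M i j l"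
    by (rule key[OF emb])
  show ?thesis unfolding ell14[of a' b'] big14[symmetric] by (simp add: k ring_distribs)
qed

definition nM :: "int mat \<Rightarrow> int" where
 "nM M = M$$(1,1) * (M$$(2,2)*M$$(3,3) - M$$(2,3)*M$$(3,2)) - M$$(2,1)*(M$$(1,2)*M$$(3,3) - M$$(1,3)*M$$(3,2))
   + M$$(3,1)*(M$$(1,2)*M$$(2,3) - M$$(1,3)*M$$(2,2))"
lemma nM_detf: "rat_of_int (nM M) = detf (Dm M)" by (simp add: nM_def detf_def Dm_def)

lemma relint0: assumes emb: "quartic_subring_embedding a' b' a b M"
  shows "nM M * lam a' b' 2 2 1 1 = lam (tr1 M a) (tr1 M b) 2 2 1 1"
proof -
  have "rat_of_int (nM M * lam a' b' 2 2 1 1) = rat_of_int (lam (tr1 M a) (tr1 M b) 2 2 1 1)"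
    using rel0[OF emb] by (simp add: nM_detf)
  thus ?thesis by (simp only: of_int_eq_iff)
qed
lemma relint1: assumes emb: "quartic_subring_embedding a' b' a b M"
  shows "nM M * lam a' b' 3 3 1 1 = lam (tr1 M a) (tr1 M b) 3 3 1 1"
proof -
  have "rat_of_int (nM M * lam a' b' 3 3 1 1) = rat_of_int (lam (tr1 M a) (tr1 M b) 3 3 1 1)"
    using rel1[OF emb] by (simp add: nM_detf)
  thus ?thesis by (simp only: of_int_eq_iff)
qed
lemma relint2: assumes emb: "quartic_subring_embedding a' b' a b M"
  shows "nM M * lam a' b' 3 3 2 2 = lam (tr1 M a) (tr1 M b) 3 3 2 2"
proof -
  have "rat_of_int (nM M * lam a' b' 3 3 2 2) = rat_of_int (lam (tr1 M a) (tr1 M b) 3 3 2 2)"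
    using rel2[OF emb] by (simp add: nM_detf)
  thus ?thesis by (simp only: of_int_eq_iff)
qed
lemma relint3: assumes emb: "quartic_subring_embedding a' b' a b M"
  shows "nM M * lam a' b' 1 1 1 3 = lam (tr1 M a) (tr1 M b) 1 1 1 3"
proof -
  have "rat_of_int (nM M * lam a' b' 1 1 1 3) = rat_of_int (lam (tr1 M a) (tr1 M b) 1 1 1 3)"
    using rel3[OF emb] by (simp add: nM_detf)
  thus ?thesis by (simp only: of_int_eq_iff)
qed
lemma relint4: assumes emb: "quartic_subring_embedding a' b' a b M"
  shows "nM M * lam a' b' 1 1 1 2 = lam (tr1 M a) (tr1 M b) 1 1 1 2"
proof -
  have "rat_of_int (nM M * lam a' b' 1 1 1 2) = rat_of_int (lam (tr1 M a) (tr1 M b) 1 1 1 2)"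
    using rel4[OF emb] by (simp add: nM_detf)
  thus ?thesis by (simp only: of_int_eq_iff)
qed
lemma relint5: assumes emb: "quartic_subring_embedding a' b' a b M"
  shows "nM M * lam a' b' 2 2 2 1 = lam (tr1 M a) (tr1 M b) 2 2 2 1"
proof -
  have "rat_of_int (nM M * lam a' b' 2 2 2 1) = rat_of_int (lam (tr1 M a) (tr1 M b) 2 2 2 1)"
    using rel5[OF emb] by (simp add: nM_detf)
  thus ?thesis by (simp only: of_int_eq_iff)
qed
lemma relint6: assumes emb: "quartic_subring_embedding a' b' a b M"
  shows "nM M * lam a' b' 2 2 2 3 = lam (tr1 M a) (tr1 M b) 2 2 2 3"
proof -
  have "rat_of_int (nM M * lam a' b' 2 2 2 3) = rat_of_int (lam (tr1 M a) (tr1 M b) 2 2 2 3)"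
    using rel6[OF emb] by (simp add: nM_detf)
  thus ?thesis by (simp only: of_int_eq_iff)
qed
lemma relint7: assumes emb: "quartic_subring_embedding a' b' a b M"
  shows "nM M * lam a' b' 3 3 3 2 = lam (tr1 M a) (tr1 M b) 3 3 3 2"
proof -
  have "rat_of_int (nM M * lam a' b' 3 3 3 2) = rat_of_int (lam (tr1 M a) (tr1 M b) 3 3 3 2)"
    using rel7[OF emb] by (simp add: nM_detf)
  thus ?thesis by (simp only: of_int_eq_iff)
qed
lemma relint8: assumes emb: "quartic_subring_embedding a' b' a b M"
  shows "nM M * lam a' b' 3 3 3 1 = lam (tr1 M a) (tr1 M b) 3 3 3 1"
proof -
  have "rat_of_int (nM M * lam a' b' 3 3 3 1) = rat_of_int (lam (tr1 M a) (tr1 M b) 3 3 3 1)"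
    using rel8[OF emb] by (simp add: nM_detf)
  thus ?thesis by (simp only: of_int_eq_iff)
qed
lemma relint9: assumes emb: "quartic_subring_embedding a' b' a b M"
  shows "nM M * lam a' b' 1 3 1 2 = lam (tr1 M a) (tr1 M b) 1 3 1 2"
proof -
  have "rat_of_int (nM M * lam a' b' 1 3 1 2) = rat_of_int (lam (tr1 M a) (tr1 M b) 1 3 1 2)"
    using rel9[OF emb] by (simp add: nM_detf)
  thus ?thesis by (simp only: of_int_eq_iff)
qed
lemma relint10: assumes emb: "quartic_subring_embedding a' b' a b M"
  shows "nM M * lam a' b' 2 1 2 3 = lam (tr1 M a) (tr1 M b) 2 1 2 3"
proof -
  have "rat_of_int (nM M * lam a' b' 2 1 2 3) = rat_of_int (lam (tr1 M a) (tr1 M b) 2 1 2 3)"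
    using rel10[OF emb] by (simp add: nM_detf)
  thus ?thesis by (simp only: of_int_eq_iff)
qed
lemma relint11: assumes emb: "quartic_subring_embedding a' b' a b M"
  shows "nM M * lam a' b' 3 2 3 1 = lam (tr1 M a) (tr1 M b) 3 2 3 1"
proof -
  have "rat_of_int (nM M * lam a' b' 3 2 3 1) = rat_of_int (lam (tr1 M a) (tr1 M b) 3 2 3 1)"
    using rel11[OF emb] by (simp add: nM_detf)
  thus ?thesis by (simp only: of_int_eq_iff)
qed
lemma relint12: assumes emb: "quartic_subring_embedding a' b' a b M"
  shows "nM M * lam a' b' 2 3 1 1 = lam (tr1 M a) (tr1 M b) 2 3 1 1"
proof -
  have "rat_of_int (nM M * lam a' b' 2 3 1 1) = rat_of_int (lam (tr1 M a) (tr1 M b) 2 3 1 1)"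
    using rel12[OF emb] by (simp add: nM_detf)
  thus ?thesis by (simp only: of_int_eq_iff)
qed
lemma relint13: assumes emb: "quartic_subring_embedding a' b' a b M"
  shows "nM M * lam a' b' 1 3 2 2 = lam (tr1 M a) (tr1 M b) 1 3 2 2"
proof -
  have "rat_of_int (nM M * lam a' b' 1 3 2 2) = rat_of_int (lam (tr1 M a) (tr1 M b) 1 3 2 2)"
    using rel13[OF emb] by (simp add: nM_detf)
  thus ?thesis by (simp only: of_int_eq_iff)
qed
lemma relint14: assumes emb: "quartic_subring_embedding a' b' a b M"
  shows "nM M * lam a' b' 1 2 3 3 = lam (tr1 M a) (tr1 M b) 1 2 3 3"
proof -
  have "rat_of_int (nM M * lam a' b' 1 2 3 3) = rat_of_int (lam (tr1 M a) (tr1 M b) 1 2 3 3)"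
    using rel14[OF emb] by (simp add: nM_detf)
  thus ?thesis by (simp only: of_int_eq_iff)
qed
lemma lq0: "lam a b 1 1 1 1 = 0" by (simp add: lam_def symc_def)
lemma lq3: "lam a b 1 1 2 1 = lam a b 1 1 1 2" by (simp add: lam_def symc_def)
lemma lq4: "lam a b 1 1 2 2 = - lam a b 2 2 1 1" by (simp add: lam_def symc_def)
lemma lq5: "lam a b 1 1 2 3 = - lam a b 2 3 1 1" by (simp add: lam_def symc_def)
lemma lq6: "lam a b 1 1 3 1 = lam a b 1 1 1 3" by (simp add: lam_def symc_def)
lemma lq7: "lam a b 1 1 3 2 = - lam a b 2 3 1 1" by (simp add: lam_def symc_def)
lemma lq8: "lam a b 1 1 3 3 = - lam a b 3 3 1 1" by (simp add: lam_def symc_def)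
lemma lq9: "lam a b 1 2 1 1 = - lam a b 1 1 1 2" by (simp add: lam_def symc_def)
lemma lq10: "lam a b 1 2 1 2 = 0" by (simp add: lam_def symc_def)
lemma lq11: "lam a b 1 2 1 3 = - lam a b 1 3 1 2" by (simp add: lam_def symc_def)
lemma lq12: "lam a b 1 2 2 1 = 0" by (simp add: lam_def symc_def)
lemma lq13: "lam a b 1 2 2 2 = - lam a b 2 2 2 1" by (simp add: lam_def symc_def)
lemma lq14: "lam a b 1 2 2 3 = lam a b 2 1 2 3" by (simp add: lam_def symc_def)
lemma lq15: "lam a b 1 2 3 1 = - lam a b 1 3 1 2" by (simp add: lam_def symc_def)
lemma lq16: "lam a b 1 2 3 2 = lam a b 2 1 2 3" by (simp add: lam_def symc_def)
lemma lq18: "lam a b 1 3 1 1 = - lam a b 1 1 1 3" by (simp add: lam_def symc_def)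
lemma lq20: "lam a b 1 3 1 3 = 0" by (simp add: lam_def symc_def)
lemma lq21: "lam a b 1 3 2 1 = lam a b 1 3 1 2" by (simp add: lam_def symc_def)
lemma lq23: "lam a b 1 3 2 3 = - lam a b 3 2 3 1" by (simp add: lam_def symc_def)
lemma lq24: "lam a b 1 3 3 1 = 0" by (simp add: lam_def symc_def)
lemma lq25: "lam a b 1 3 3 2 = - lam a b 3 2 3 1" by (simp add: lam_def symc_def)
lemma lq26: "lam a b 1 3 3 3 = - lam a b 3 3 3 1" by (simp add: lam_def symc_def)
lemma lq27: "lam a b 2 1 1 1 = - lam a b 1 1 1 2" by (simp add: lam_def symc_def)
lemma lq28: "lam a b 2 1 1 2 = 0" by (simp add: lam_def symc_def)
lemma lq29: "lam a b 2 1 1 3 = - lam a b 1 3 1 2" by (simp add: lam_def symc_def)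
lemma lq30: "lam a b 2 1 2 1 = 0" by (simp add: lam_def symc_def)
lemma lq31: "lam a b 2 1 2 2 = - lam a b 2 2 2 1" by (simp add: lam_def symc_def)
lemma lq33: "lam a b 2 1 3 1 = - lam a b 1 3 1 2" by (simp add: lam_def symc_def)
lemma lq34: "lam a b 2 1 3 2 = lam a b 2 1 2 3" by (simp add: lam_def symc_def)
lemma lq35: "lam a b 2 1 3 3 = lam a b 1 2 3 3" by (simp add: lam_def symc_def)
lemma lq37: "lam a b 2 2 1 2 = lam a b 2 2 2 1" by (simp add: lam_def symc_def)
lemma lq38: "lam a b 2 2 1 3 = - lam a b 1 3 2 2" by (simp add: lam_def symc_def)
lemma lq40: "lam a b 2 2 2 2 = 0" by (simp add: lam_def symc_def)
lemma lq42: "lam a b 2 2 3 1 = - lam a b 1 3 2 2" by (simp add: lam_def symc_def)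
lemma lq43: "lam a b 2 2 3 2 = lam a b 2 2 2 3" by (simp add: lam_def symc_def)
lemma lq44: "lam a b 2 2 3 3 = - lam a b 3 3 2 2" by (simp add: lam_def symc_def)
lemma lq46: "lam a b 2 3 1 2 = - lam a b 2 1 2 3" by (simp add: lam_def symc_def)
lemma lq47: "lam a b 2 3 1 3 = lam a b 3 2 3 1" by (simp add: lam_def symc_def)
lemma lq48: "lam a b 2 3 2 1 = - lam a b 2 1 2 3" by (simp add: lam_def symc_def)
lemma lq49: "lam a b 2 3 2 2 = - lam a b 2 2 2 3" by (simp add: lam_def symc_def)
lemma lq50: "lam a b 2 3 2 3 = 0" by (simp add: lam_def symc_def)
lemma lq51: "lam a b 2 3 3 1 = lam a b 3 2 3 1" by (simp add: lam_def symc_def)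
lemma lq52: "lam a b 2 3 3 2 = 0" by (simp add: lam_def symc_def)
lemma lq53: "lam a b 2 3 3 3 = - lam a b 3 3 3 2" by (simp add: lam_def symc_def)
lemma lq54: "lam a b 3 1 1 1 = - lam a b 1 1 1 3" by (simp add: lam_def symc_def)
lemma lq55: "lam a b 3 1 1 2 = lam a b 1 3 1 2" by (simp add: lam_def symc_def)
lemma lq56: "lam a b 3 1 1 3 = 0" by (simp add: lam_def symc_def)
lemma lq57: "lam a b 3 1 2 1 = lam a b 1 3 1 2" by (simp add: lam_def symc_def)
lemma lq58: "lam a b 3 1 2 2 = lam a b 1 3 2 2" by (simp add: lam_def symc_def)
lemma lq59: "lam a b 3 1 2 3 = - lam a b 3 2 3 1" by (simp add: lam_def symc_def)
lemma lq60: "lam a b 3 1 3 1 = 0" by (simp add: lam_def symc_def)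
lemma lq61: "lam a b 3 1 3 2 = - lam a b 3 2 3 1" by (simp add: lam_def symc_def)
lemma lq62: "lam a b 3 1 3 3 = - lam a b 3 3 3 1" by (simp add: lam_def symc_def)
lemma lq63: "lam a b 3 2 1 1 = lam a b 2 3 1 1" by (simp add: lam_def symc_def)
lemma lq64: "lam a b 3 2 1 2 = - lam a b 2 1 2 3" by (simp add: lam_def symc_def)
lemma lq65: "lam a b 3 2 1 3 = lam a b 3 2 3 1" by (simp add: lam_def symc_def)
lemma lq66: "lam a b 3 2 2 1 = - lam a b 2 1 2 3" by (simp add: lam_def symc_def)
lemma lq67: "lam a b 3 2 2 2 = - lam a b 2 2 2 3" by (simp add: lam_def symc_def)
lemma lq68: "lam a b 3 2 2 3 = 0" by (simp add: lam_def symc_def)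
lemma lq70: "lam a b 3 2 3 2 = 0" by (simp add: lam_def symc_def)
lemma lq71: "lam a b 3 2 3 3 = - lam a b 3 3 3 2" by (simp add: lam_def symc_def)
lemma lq73: "lam a b 3 3 1 2 = - lam a b 1 2 3 3" by (simp add: lam_def symc_def)
lemma lq74: "lam a b 3 3 1 3 = lam a b 3 3 3 1" by (simp add: lam_def symc_def)
lemma lq75: "lam a b 3 3 2 1 = - lam a b 1 2 3 3" by (simp add: lam_def symc_def)
lemma lq77: "lam a b 3 3 2 3 = lam a b 3 3 3 2" by (simp add: lam_def symc_def)
lemma lq80: "lam a b 3 3 3 3 = 0" by (simp add: lam_def symc_def)

lemma rel_all: assumes emb: "quartic_subring_embedding a' b' a b M"
  shows "\<And>i j k l. i \<in> S3 \<Longrightarrow> j \<in> S3 \<Longrightarrow> k \<in> S3 \<Longrightarrow> l \<in> S3 \<Longrightarrow>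
     nM M * lam a' b' i j k l = lam (tr1 M a) (tr1 M b) i j k l"
proof -
  have F0: "nM M * lam a' b' 1 1 1 1 = lam (tr1 M a) (tr1 M b) 1 1 1 1" unfolding lq0 by simp
  have F1: "nM M * lam a' b' 1 1 1 2 = lam (tr1 M a) (tr1 M b) 1 1 1 2" by (rule relint4[OF emb])
  have F2: "nM M * lam a' b' 1 1 1 3 = lam (tr1 M a) (tr1 M b) 1 1 1 3" by (rule relint3[OF emb])
  have F3: "nM M * lam a' b' 1 1 2 1 = lam (tr1 M a) (tr1 M b) 1 1 2 1" unfolding lq3 by (rule relint4[OF emb])
  have F4: "nM M * lam a' b' 1 1 2 2 = lam (tr1 M a) (tr1 M b) 1 1 2 2" unfolding lq4 using relint0[OF emb] by simp
  have F5: "nM M * lam a' b' 1 1 2 3 = lam (tr1 M a) (tr1 M b) 1 1 2 3" unfolding lq5 using relint12[OF emb] by simp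
  have F6: "nM M * lam a' b' 1 1 3 1 = lam (tr1 M a) (tr1 M b) 1 1 3 1" unfolding lq6 by (rule relint3[OF emb])
  have F7: "nM M * lam a' b' 1 1 3 2 = lam (tr1 M a) (tr1 M b) 1 1 3 2" unfolding lq7 using relint12[OF emb] by simp
  have F8: "nM M * lam a' b' 1 1 3 3 = lam (tr1 M a) (tr1 M b) 1 1 3 3" unfolding lq8 using relint1[OF emb] by simp
  have F9: "nM M * lam a' b' 1 2 1 1 = lam (tr1 M a) (tr1 M b) 1 2 1 1" unfolding lq9 using relint4[OF emb] by simp
  have F10: "nM M * lam a' b' 1 2 1 2 = lam (tr1 M a) (tr1 M b) 1 2 1 2" unfolding lq10 by simp
  have F11: "nM M * lam a' b' 1 2 1 3 = lam (tr1 M a) (tr1 M b) 1 2 1 3" unfolding lq11 using relint9[OF emb] by simp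
  have F12: "nM M * lam a' b' 1 2 2 1 = lam (tr1 M a) (tr1 M b) 1 2 2 1" unfolding lq12 by simp
  have F13: "nM M * lam a' b' 1 2 2 2 = lam (tr1 M a) (tr1 M b) 1 2 2 2" unfolding lq13 using relint5[OF emb] by simp
  have F14: "nM M * lam a' b' 1 2 2 3 = lam (tr1 M a) (tr1 M b) 1 2 2 3" unfolding lq14 by (rule relint10[OF emb])
  have F15: "nM M * lam a' b' 1 2 3 1 = lam (tr1 M a) (tr1 M b) 1 2 3 1" unfolding lq15 using relint9[OF emb] by simp
  have F16: "nM M * lam a' b' 1 2 3 2 = lam (tr1 M a) (tr1 M b) 1 2 3 2" unfolding lq16 by (rule relint10[OF emb])
  have F17: "nM M * lam a' b' 1 2 3 3 = lam (tr1 M a) (tr1 M b) 1 2 3 3" by (rule relint14[OF emb])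
  have F18: "nM M * lam a' b' 1 3 1 1 = lam (tr1 M a) (tr1 M b) 1 3 1 1" unfolding lq18 using relint3[OF emb] by simp
  have F19: "nM M * lam a' b' 1 3 1 2 = lam (tr1 M a) (tr1 M b) 1 3 1 2" by (rule relint9[OF emb])
  have F20: "nM M * lam a' b' 1 3 1 3 = lam (tr1 M a) (tr1 M b) 1 3 1 3" unfolding lq20 by simp
  have F21: "nM M * lam a' b' 1 3 2 1 = lam (tr1 M a) (tr1 M b) 1 3 2 1" unfolding lq21 by (rule relint9[OF emb])
  have F22: "nM M * lam a' b' 1 3 2 2 = lam (tr1 M a) (tr1 M b) 1 3 2 2" by (rule relint13[OF emb])
  have F23: "nM M * lam a' b' 1 3 2 3 = lam (tr1 M a) (tr1 M b) 1 3 2 3" unfolding lq23 using relint11[OF emb] by simp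
  have F24: "nM M * lam a' b' 1 3 3 1 = lam (tr1 M a) (tr1 M b) 1 3 3 1" unfolding lq24 by simp
  have F25: "nM M * lam a' b' 1 3 3 2 = lam (tr1 M a) (tr1 M b) 1 3 3 2" unfolding lq25 using relint11[OF emb] by simp
  have F26: "nM M * lam a' b' 1 3 3 3 = lam (tr1 M a) (tr1 M b) 1 3 3 3" unfolding lq26 using relint8[OF emb] by simp
  have F27: "nM M * lam a' b' 2 1 1 1 = lam (tr1 M a) (tr1 M b) 2 1 1 1" unfolding lq27 using relint4[OF emb] by simp
  have F28: "nM M * lam a' b' 2 1 1 2 = lam (tr1 M a) (tr1 M b) 2 1 1 2" unfolding lq28 by simp
  have F29: "nM M * lam a' b' 2 1 1 3 = lam (tr1 M a) (tr1 M b) 2 1 1 3" unfolding lq29 using relint9[OF emb] by simp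
  have F30: "nM M * lam a' b' 2 1 2 1 = lam (tr1 M a) (tr1 M b) 2 1 2 1" unfolding lq30 by simp
  have F31: "nM M * lam a' b' 2 1 2 2 = lam (tr1 M a) (tr1 M b) 2 1 2 2" unfolding lq31 using relint5[OF emb] by simp
  have F32: "nM M * lam a' b' 2 1 2 3 = lam (tr1 M a) (tr1 M b) 2 1 2 3" by (rule relint10[OF emb])
  have F33: "nM M * lam a' b' 2 1 3 1 = lam (tr1 M a) (tr1 M b) 2 1 3 1" unfolding lq33 using relint9[OF emb] by simp
  have F34: "nM M * lam a' b' 2 1 3 2 = lam (tr1 M a) (tr1 M b) 2 1 3 2" unfolding lq34 by (rule relint10[OF emb])
  have F35: "nM M * lam a' b' 2 1 3 3 = lam (tr1 M a) (tr1 M b) 2 1 3 3" unfolding lq35 by (rule relint14[OF emb])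
  have F36: "nM M * lam a' b' 2 2 1 1 = lam (tr1 M a) (tr1 M b) 2 2 1 1" by (rule relint0[OF emb])
  have F37: "nM M * lam a' b' 2 2 1 2 = lam (tr1 M a) (tr1 M b) 2 2 1 2" unfolding lq37 by (rule relint5[OF emb])
  have F38: "nM M * lam a' b' 2 2 1 3 = lam (tr1 M a) (tr1 M b) 2 2 1 3" unfolding lq38 using relint13[OF emb] by simp
  have F39: "nM M * lam a' b' 2 2 2 1 = lam (tr1 M a) (tr1 M b) 2 2 2 1" by (rule relint5[OF emb])
  have F40: "nM M * lam a' b' 2 2 2 2 = lam (tr1 M a) (tr1 M b) 2 2 2 2" unfolding lq40 by simp
  have F41: "nM M * lam a' b' 2 2 2 3 = lam (tr1 M a) (tr1 M b) 2 2 2 3" by (rule relint6[OF emb])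
  have F42: "nM M * lam a' b' 2 2 3 1 = lam (tr1 M a) (tr1 M b) 2 2 3 1" unfolding lq42 using relint13[OF emb] by simp
  have F43: "nM M * lam a' b' 2 2 3 2 = lam (tr1 M a) (tr1 M b) 2 2 3 2" unfolding lq43 by (rule relint6[OF emb])
  have F44: "nM M * lam a' b' 2 2 3 3 = lam (tr1 M a) (tr1 M b) 2 2 3 3" unfolding lq44 using relint2[OF emb] by simp
  have F45: "nM M * lam a' b' 2 3 1 1 = lam (tr1 M a) (tr1 M b) 2 3 1 1" by (rule relint12[OF emb])
  have F46: "nM M * lam a' b' 2 3 1 2 = lam (tr1 M a) (tr1 M b) 2 3 1 2" unfolding lq46 using relint10[OF emb] by simp
  have F47: "nM M * lam a' b' 2 3 1 3 = lam (tr1 M a) (tr1 M b) 2 3 1 3" unfolding lq47 by (rule relint11[OF emb])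
  have F48: "nM M * lam a' b' 2 3 2 1 = lam (tr1 M a) (tr1 M b) 2 3 2 1" unfolding lq48 using relint10[OF emb] by simp
  have F49: "nM M * lam a' b' 2 3 2 2 = lam (tr1 M a) (tr1 M b) 2 3 2 2" unfolding lq49 using relint6[OF emb] by simp
  have F50: "nM M * lam a' b' 2 3 2 3 = lam (tr1 M a) (tr1 M b) 2 3 2 3" unfolding lq50 by simp
  have F51: "nM M * lam a' b' 2 3 3 1 = lam (tr1 M a) (tr1 M b) 2 3 3 1" unfolding lq51 by (rule relint11[OF emb])
  have F52: "nM M * lam a' b' 2 3 3 2 = lam (tr1 M a) (tr1 M b) 2 3 3 2" unfolding lq52 by simp
  have F53: "nM M * lam a' b' 2 3 3 3 = lam (tr1 M a) (tr1 M b) 2 3 3 3" unfolding lq53 using relint7[OF emb] by simp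
  have F54: "nM M * lam a' b' 3 1 1 1 = lam (tr1 M a) (tr1 M b) 3 1 1 1" unfolding lq54 using relint3[OF emb] by simp
  have F55: "nM M * lam a' b' 3 1 1 2 = lam (tr1 M a) (tr1 M b) 3 1 1 2" unfolding lq55 by (rule relint9[OF emb])
  have F56: "nM M * lam a' b' 3 1 1 3 = lam (tr1 M a) (tr1 M b) 3 1 1 3" unfolding lq56 by simp
  have F57: "nM M * lam a' b' 3 1 2 1 = lam (tr1 M a) (tr1 M b) 3 1 2 1" unfolding lq57 by (rule relint9[OF emb])
  have F58: "nM M * lam a' b' 3 1 2 2 = lam (tr1 M a) (tr1 M b) 3 1 2 2" unfolding lq58 by (rule relint13[OF emb])
  have F59: "nM M * lam a' b' 3 1 2 3 = lam (tr1 M a) (tr1 M b) 3 1 2 3" unfolding lq59 using relint11[OF emb] by simp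
  have F60: "nM M * lam a' b' 3 1 3 1 = lam (tr1 M a) (tr1 M b) 3 1 3 1" unfolding lq60 by simp
  have F61: "nM M * lam a' b' 3 1 3 2 = lam (tr1 M a) (tr1 M b) 3 1 3 2" unfolding lq61 using relint11[OF emb] by simp
  have F62: "nM M * lam a' b' 3 1 3 3 = lam (tr1 M a) (tr1 M b) 3 1 3 3" unfolding lq62 using relint8[OF emb] by simp
  have F63: "nM M * lam a' b' 3 2 1 1 = lam (tr1 M a) (tr1 M b) 3 2 1 1" unfolding lq63 by (rule relint12[OF emb])
  have F64: "nM M * lam a' b' 3 2 1 2 = lam (tr1 M a) (tr1 M b) 3 2 1 2" unfolding lq64 using relint10[OF emb] by simp
  have F65: "nM M * lam a' b' 3 2 1 3 = lam (tr1 M a) (tr1 M b) 3 2 1 3" unfolding lq65 by (rule relint11[OF emb])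
  have F66: "nM M * lam a' b' 3 2 2 1 = lam (tr1 M a) (tr1 M b) 3 2 2 1" unfolding lq66 using relint10[OF emb] by simp
  have F67: "nM M * lam a' b' 3 2 2 2 = lam (tr1 M a) (tr1 M b) 3 2 2 2" unfolding lq67 using relint6[OF emb] by simp
  have F68: "nM M * lam a' b' 3 2 2 3 = lam (tr1 M a) (tr1 M b) 3 2 2 3" unfolding lq68 by simp
  have F69: "nM M * lam a' b' 3 2 3 1 = lam (tr1 M a) (tr1 M b) 3 2 3 1" by (rule relint11[OF emb])
  have F70: "nM M * lam a' b' 3 2 3 2 = lam (tr1 M a) (tr1 M b) 3 2 3 2" unfolding lq70 by simp
  have F71: "nM M * lam a' b' 3 2 3 3 = lam (tr1 M a) (tr1 M b) 3 2 3 3" unfolding lq71 using relint7[OF emb] by simp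
  have F72: "nM M * lam a' b' 3 3 1 1 = lam (tr1 M a) (tr1 M b) 3 3 1 1" by (rule relint1[OF emb])
  have F73: "nM M * lam a' b' 3 3 1 2 = lam (tr1 M a) (tr1 M b) 3 3 1 2" unfolding lq73 using relint14[OF emb] by simp
  have F74: "nM M * lam a' b' 3 3 1 3 = lam (tr1 M a) (tr1 M b) 3 3 1 3" unfolding lq74 by (rule relint8[OF emb])
  have F75: "nM M * lam a' b' 3 3 2 1 = lam (tr1 M a) (tr1 M b) 3 3 2 1" unfolding lq75 using relint14[OF emb] by simp
  have F76: "nM M * lam a' b' 3 3 2 2 = lam (tr1 M a) (tr1 M b) 3 3 2 2" by (rule relint2[OF emb])
  have F77: "nM M * lam a' b' 3 3 2 3 = lam (tr1 M a) (tr1 M b) 3 3 2 3" unfolding lq77 by (rule relint7[OF emb])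
  have F78: "nM M * lam a' b' 3 3 3 1 = lam (tr1 M a) (tr1 M b) 3 3 3 1" by (rule relint8[OF emb])
  have F79: "nM M * lam a' b' 3 3 3 2 = lam (tr1 M a) (tr1 M b) 3 3 3 2" by (rule relint7[OF emb])
  have F80: "nM M * lam a' b' 3 3 3 3 = lam (tr1 M a) (tr1 M b) 3 3 3 3" unfolding lq80 by simp
  note FF = F0 F1 F2 F3 F4 F5 F6 F7 F8 F9 F10 F11 F12 F13 F14 F15 F16 F17 F18 F19 F20 F21 F22 F23 F24 F25 F26 F27 F28 F29 F30 F31 F32 F33 F34 F35 F36 F37 F38 F39 F40 F41 F42 F43 F44 F45 F46 F47 F48 F49 F50 F51 F52 F53 F54 F55 F56 F57 F58 F59 F60 F61 F62 F63 F64 F65 F66 F67 F68 F69 F70 F71 F72 F73 F74 F75 F76 F77 F78 F79 F80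
  have S3_all: "\<And>P. (\<forall>x\<in>S3. P x) \<longleftrightarrow> P 1 \<and> P 2 \<and> P 3" by auto
  have "\<forall>i\<in>S3. \<forall>j\<in>S3. \<forall>k\<in>S3. \<forall>l\<in>S3. nM M * lam a' b' i j k l = lam (tr1 M a) (tr1 M b) i j k l"
    unfolding S3_all by (intro conjI; rule FF)
  thus "\<And>i j k l. i \<in> S3 \<Longrightarrow> j \<in> S3 \<Longrightarrow> k \<in> S3 \<Longrightarrow> l \<in> S3 \<Longrightarrow>
     nM M * lam a' b' i j k l = lam (tr1 M a) (tr1 M b) i j k l" by blast
qed

lemma numfix: "Suc 0 = 1" "Suc 1 = 2" "Suc 2 = 3" by simp_all

lemma comb_aux: fixes p q r s n x y :: rat assumes d: "p*s - q*r = n" and n: "n \<noteq> 0"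
  shows "s / n * (p * x + q * y) + - q / n * (r * x + s * y) = x"
    "- r / n * (p * x + q * y) + p / n * (r * x + s * y) = y"
proof -
  have n': "p*s - q*r \<noteq> 0" using d n by simp
  have "s / n * (p * x + q * y) + - q / n * (r * x + s * y) = (s * (p * x + q * y) - q * (r * x + s * y)) / n"
    by (simp add: diff_divide_distrib add_divide_distrib)
  also have "s * (p * x + q * y) - q * (r * x + s * y) = (p*s - q*r) * x" by (simp add: algebra_simps)
  finally show "s / n * (p * x + q * y) + - q / n * (r * x + s * y) = x" using n unfolding d by simp
  have "- r / n * (p * x + q * y) + p / n * (r * x + s * y) = (p * (r * x + s * y) - r * (p * x + q * y)) / n"
    by (simp add: diff_divide_distrib add_divide_distrib)
  also have "p * (r * x + s * y) - r * (p * x + q * y) = (p*s - q*r) * y" by (simp add: algebra_simps)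
  finally show "- r / n * (p * x + q * y) + p / n * (r * x + s * y) = y" using n unfolding d by simp
qed

lemma col0_facts: assumes emb: "quartic_subring_embedding a' b' a b M"
  shows "M $$ (0,0) = 1" "M $$ (1,0) = 0" "M $$ (2,0) = 0" "M $$ (3,0) = 0"
proof -
  have h: "\<And>k. k < 4 \<Longrightarrow> rat_of_int (M $$ (k,0)) = basis4 0 k"
    using emb unfolding quartic_subring_embedding_def by (auto simp: lin4_basis)
  show "M $$ (0,0) = 1" using h[of 0] by (simp add: basis4_def)
  show "M $$ (1,0) = 0" using h[of 1] by (simp add: basis4_def)
  show "M $$ (2,0) = 0" using h[of 2] by (simp add: basis4_def)
  show "M $$ (3,0) = 0" using h[of 3] by (simp add: basis4_def)
qed

lemma detM: assumes emb: "quartic_subring_embedding a' b' a b M"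
  shows "det M = nM M"
proof -
  have car: "M \<in> carrier_mat 4 4" using emb unfolding quartic_subring_embedding_def by simp
  note c = col0_facts[OF emb]
  have "det M = (\<Sum>i<4. M $$ (i, 0) * cofactor M i 0)"
    by (rule laplace_expansion_column[OF car]) simp
  also have "\<dots> = cofactor M 0 0" unfolding sum4 using c by simp
  also have "\<dots> = det (mat_delete M 0 0)" by (simp add: cofactor_def)
  also have "\<dots> = nM M"
  proof -
    have cd: "mat_delete M 0 0 \<in> carrier_mat 3 3" using mat_delete_carrier[OF car] by simp
    show ?thesis unfolding det3[OF cd] using car by (simp del: One_nat_def add: numfix mat_delete_def nM_def algebra_simps)
  qed
  finally show ?thesis .
qed

definition d1of :: "int mat \<Rightarrow> int mat" where
  "d1of M = mat 3 3 (\<lambda>(i,j). M $$ (j+1, i+1))"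

lemma d1of_carrier: "d1of M \<in> carrier_mat 3 3" by (simp add: d1of_def)

lemma det_d1of: "det (d1of M) = nM M"
  unfolding det3[OF d1of_carrier] by (simp del: One_nat_def add: numfix d1of_def nM_def algebra_simps)

lemma tr_eval: "tqf_eval a (vmul3 v (d1of M)) = tqf_eval (tr1 M a) v"
  unfolding tqf_eval_def vmul3_def tr1_def sumE
  by (simp del: One_nat_def add: One_nat_def[symmetric] d1of_def) (simp add: algebra_simps)

lemma eval_comb:
  assumes h: "\<forall>i\<in>S3. \<forall>j\<in>S3. symc X i j = p * symc A i j + q * symc B i j"
  shows "tqf_eval X v = of_int p * tqf_eval A v + of_int q * tqf_eval B v"
proof -
  have e: "X i j = p * A i j + q * B i j" if "i \<in> S3" "j \<in> S3" "i \<le> j" for i j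
    using h that by (auto simp: symc_def)
  have "X 1 1 = p * A 1 1 + q * B 1 1" "X 1 2 = p * A 1 2 + q * B 1 2" "X 1 3 = p * A 1 3 + q * B 1 3"
       "X 2 2 = p * A 2 2 + q * B 2 2" "X 2 3 = p * A 2 3 + q * B 2 3" "X 3 3 = p * A 3 3 + q * B 3 3"
    by (rule e; simp)+
  thus ?thesis unfolding tqf_eval_def sumE by (simp add: algebra_simps)
qed

definition d2of :: "int \<Rightarrow> int \<Rightarrow> int \<Rightarrow> int \<Rightarrow> int mat" where
  "d2of p q r s = mat 2 2 (\<lambda>(i,j). if i = 0 then (if j = 0 then p else q) else (if j = 0 then r else s))"

lemma d2of_carrier: "d2of p q r s \<in> carrier_mat 2 2" by (simp add: d2of_def)

lemma det_d2of: "det (d2of p q r s) = p * s - q * r"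
  unfolding det2[OF d2of_carrier] by (simp add: d2of_def)

lemma inv_d2of:
  shows "inv_rat (d2of p q r s) $$ (0,0) = of_int s / of_int (p * s - q * r)"
    "inv_rat (d2of p q r s) $$ (0,1) = - of_int q / of_int (p * s - q * r)"
    "inv_rat (d2of p q r s) $$ (1,0) = - of_int r / of_int (p * s - q * r)"
    "inv_rat (d2of p q r s) $$ (1,1) = of_int p / of_int (p * s - q * r)"
proof -
  let ?D = "map_mat rat_of_int (d2of p q r s)"
  have car: "?D \<in> carrier_mat 2 2" by (simp add: d2of_def)
  have cd: "\<And>i j. mat_delete ?D i j \<in> carrier_mat 1 1" using mat_delete_carrier[OF car] by simp
  have dt: "det ?D = of_int (p * s - q * r)" unfolding det2[OF car] by (simp add: d2of_def)
  show "inv_rat (d2of p q r s) $$ (0,0) = of_int s / of_int (p * s - q * r)"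
    "inv_rat (d2of p q r s) $$ (0,1) = - of_int q / of_int (p * s - q * r)"
    "inv_rat (d2of p q r s) $$ (1,0) = - of_int r / of_int (p * s - q * r)"
    "inv_rat (d2of p q r s) $$ (1,1) = of_int p / of_int (p * s - q * r)"
    unfolding inv_rat_def dt using car
    by (simp_all add: adj_mat_def cofactor_def det1[OF cd], simp_all add: mat_delete_def d2of_def)
qed

theorem proposition5p6:
  fixes a b a' b' :: tqf and M :: "int mat"
  assumes "primitive_pair a b" and "nondegenerate_pair a b"
    and "primitive_pair a' b'" and "nondegenerate_pair a' b'"
    and "quartic_subring_embedding a' b' a b M"
  shows "\<exists>d1 d2 :: int mat. d1 \<in> carrier_mat 3 3 \<and> d2 \<in> carrier_mat 2 2 \<and>
           (tqf_eval a', tqf_eval b') = pair_act d1 (inv_rat d2) a b \<and>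
           \<bar>det d1\<bar> = \<bar>det M\<bar> \<and> \<bar>det d2\<bar> = \<bar>det M\<bar>"
proof -
  note emb = assms(5)
  have n0: "nM M \<noteq> 0" using emb detM[OF emb] unfolding quartic_subring_embedding_def by simp
  obtain p q r s where
    pqrs: "\<forall>i\<in>S3. \<forall>j\<in>S3. symc (tr1 M a) i j = p * symc a' i j + q * symc b' i j
                     \<and> symc (tr1 M b) i j = r * symc a' i j + s * symc b' i j"
    and dt: "p * s - q * r = nM M"
    using pencil[OF n0 rel_all[OF emb] assms(3)] by blast
  have hX: "\<forall>i\<in>S3. \<forall>j\<in>S3. symc (tr1 M a) i j = p * symc a' i j + q * symc b' i j" using pqrs by blast
  have hY: "\<forall>i\<in>S3. \<forall>j\<in>S3. symc (tr1 M b) i j = r * symc a' i j + s * symc b' i j" using pqrs by blast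
  define d1 where "d1 = d1of M"
  define d2 where "d2 = d2of p q r s"
  have nq: "rat_of_int (nM M) \<noteq> 0" using n0 by simp
  have dtq: "rat_of_int p * of_int s - of_int q * of_int r = of_int (nM M)"
    using dt by (metis of_int_diff of_int_mult)
  have "pair_act d1 (inv_rat d2) a b = (tqf_eval a', tqf_eval b')"
  proof -
    have e1: "\<And>v. tqf_eval a (vmul3 v d1) = of_int p * tqf_eval a' v + of_int q * tqf_eval b' v"
      unfolding d1_def tr_eval using eval_comb[OF hX] .
    have e2: "\<And>v. tqf_eval b (vmul3 v d1) = of_int r * tqf_eval a' v + of_int s * tqf_eval b' v"
      unfolding d1_def tr_eval using eval_comb[OF hY] .
    show ?thesis unfolding pair_act_def e1 e2 d2_def inv_d2of dt comb_aux[OF dtq nq] by simp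
  qed
  moreover have "det d1 = det M" unfolding d1_def det_d1of detM[OF emb] ..
  moreover have "det d2 = det M" unfolding d2_def det_d2of dt detM[OF emb] ..
  moreover have "d1 \<in> carrier_mat 3 3" "d2 \<in> carrier_mat 2 2"
    unfolding d1_def d2_def by (rule d1of_carrier, rule d2of_carrier)
  ultimately show ?thesis by metis
qed

end
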